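(* Let $\alpha_1>0$ and $\alpha_1+\alpha_2+1>0$, and suppose the loss scales as $\ell(N,D)\sim N^{-\alpha_N}+D^{-\alpha_D}$ with $\alpha_N=\alpha_1+\alpha_2+1$ and $\alpha_D=\frac{\alpha_1+\alpha_2+1}{\alpha_1+1}$. Under a fixed compute budget $C=ND\cdot\min\{N,D\}$, the unique compute-optimal allocation (minimizing $\ell$ subject to the budget) lies in the underparameterized regime $N<D$, and the optimal allocation and resulting loss scale as $$N^*(C)\sim C^{\alpha_D/(\alpha_N+2\alpha_D)}=C^{1/(\alpha_1+3)},\qquad D^*(C)\sim C^{1-2\alpha_D/(\alpha_N+2\alpha_D)}=C^{(\alpha_1+1)/(\alpha_1+3)},$$ $$\ell^*(C)\sim C^{-\alpha_C},\qquad \alpha_C:=\frac{\alpha_N\alpha_D}{\alpha_N+2\alpha_D}=\frac{\alpha_1+\alpha_2+1}{\alpha_1+3}>0.$$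
   Context: $N$ is the number of model parameters and $D$ the number of training samples; "$\sim$" denotes asymptotic scaling up to constants as $C\to\infty$. *)

theory Defs
  imports Complex_Main "HOL-Library.Landau_Symbols"
begin

definition loss :: "real \<Rightarrow> real \<Rightarrow> real \<Rightarrow> real \<Rightarrow> real" where
  "loss aN aD N D = N powr (- aN) + D powr (- aD)"

definition compute :: "real \<Rightarrow> real \<Rightarrow> real" where
  "compute N D = N * D * min N D"

definition is_opt_alloc :: "real \<Rightarrow> real \<Rightarrow> real \<Rightarrow> real \<Rightarrow> real \<Rightarrow> bool" where
  "is_opt_alloc aN aD C N D \<longleftrightarrow> N > 0 \<and> D > 0 \<and> compute N D = C \<and>
     (\<forall>N' D'. N' > 0 \<longrightarrow> D' > 0 \<longrightarrow> compute N' D' = C \<longrightarrow> loss aN aD N D \<le> loss aN aD N' D')"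

end

theory Submission
  imports Defs
begin

lemma exp_strict: fixes z :: real assumes "z \<noteq> 0" shows "1 + z < exp z"
proof (cases "1 + z/2 < 0")
  case True then show ?thesis using exp_gt_zero[of z] by linarith
next
  case False
  have "exp z = exp (z/2) * exp (z/2)" by (simp flip: exp_add)
  also have "\<dots> \<ge> (1 + z/2) * (1 + z/2)"
    using False by (intro mult_mono) auto
  finally have "exp z \<ge> 1 + z + z*z/4" by (simp add: algebra_simps)
  moreover have "z*z > 0"
  proof -
    have "z*z \<noteq> 0" using assms by (simp only: mult_eq_0_iff) simp
    then show ?thesis using zero_le_square[of z] by linarith
  qed
  ultimately show ?thesis by linarith
qed
lemma eqp: fixes C b x :: real assumes "x > 0" "C > 0" shows "(C / x^2) powr (-b) = C powr (-b) * x powr (2*b)"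
proof -
  have "(C / x^2) powr (-b) = C powr (-b) / (x^2) powr (-b)" using assms by (simp add: powr_divide)
  also have "(x^2) powr (-b) = x powr (-(2*b))"
  proof -
    have h: "x^2 = x powr 2" using assms by simp
    have "(x^2) powr (-b) = x powr (2 * (-b))" unfolding h powr_powr ..
    then show ?thesis by simp
  qed
  finally show ?thesis by (simp add: powr_minus divide_inverse)
qed
lemma p1: fixes n s a :: real assumes "n > 0" shows "(n * exp s) powr a = n powr a * exp (a*s)"
  using assms by (simp add: powr_mult exp_powr_real mult.commute)

lemma my_powr_at_top:
  fixes p Z :: real assumes p: "p > 0"
  shows "\<forall>\<^sub>F x in at_top. Z < x powr p"
proof -
  define M where "M = (max Z 0 + 1) powr (1/p)"
  have "\<forall>\<^sub>F x in at_top. M < x" by (rule eventually_gt_at_top)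
  then show ?thesis
  proof eventually_elim
    case (elim x)
    have M0: "M \<ge> 0" by (simp add: M_def)
    have "M powr p < x powr p" using elim M0 p by (intro powr_less_mono2) auto
    moreover have "M powr p = max Z 0 + 1" using p by (simp add: M_def powr_powr)
    ultimately show ?case by linarith
  qed
qed

lemma key:
  fixes a b C n N :: real
  assumes a: "a > 0" and b: "b > 0" and C: "C > 0" and n: "n > 0" and N: "N > 0"
    and cond: "a * n powr (-a) = 2*b * (C powr (-b) * n powr (2*b))"
    and ne: "N \<noteq> n"
  shows "N powr (-a) + (C / N^2) powr (-b) > n powr (-a) + (C / n^2) powr (-b)"
proof -
  define s where "s = ln (N / n)"
  have Nn: "N = n * exp s" using N n by (simp add: s_def)
  have s0: "s \<noteq> 0"
  proof
    assume "s = 0"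
    then have "N = n" using Nn by simp
    then show False using ne by contradiction
  qed
  have p1': "N powr (-a) = n powr (-a) * exp (-a*s)"
    using n unfolding Nn by (rule p1)
  have p2: "N powr (2*b) = n powr (2*b) * exp (2*b*s)"
    using n unfolding Nn by (rule p1)
  define A where "A = n powr (-a)"
  define B where "B = C powr (-b) * n powr (2*b)"
  have A0: "A > 0" "B > 0" unfolding A_def B_def using n C by simp_all
  have e1: "exp (-a*s) > 1 + (-a*s)" using s0 a by (intro exp_strict) auto
  have e2: "exp (2*b*s) > 1 + (2*b*s)" using s0 b by (intro exp_strict) auto
  have "N powr (-a) + (C / N^2) powr (-b) = A * exp (-a*s) + B * exp (2*b*s)"
    unfolding eqp[OF N C] p1' p2 A_def B_def by (simp only: mult.assoc)
  also have "\<dots> > A * (1 + (-a*s)) + B * (1 + 2*b*s)"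
    using e1 e2 A0 by (intro add_strict_mono mult_strict_left_mono) auto
  also have "A * (1 + (-a*s)) + B * (1 + 2*b*s) = A + B + s * (2*b*B - a*A)"
    by (simp add: algebra_simps)
  also have "\<dots> = A + B"
  proof -
    have "2*b*B - a*A = 0" using cond unfolding A_def B_def by (simp only: mult.assoc)
    then show ?thesis by simp
  qed
  also have "A + B = n powr (-a) + (C / n^2) powr (-b)" unfolding eqp[OF n C] A_def B_def ..
  finally show ?thesis .
qed

theorem proposition2:
  fixes \<alpha>1 \<alpha>2 :: real
  assumes "\<alpha>1 > 0" and "\<alpha>1 + \<alpha>2 + 1 > 0"
  defines "\<alpha>N \<equiv> \<alpha>1 + \<alpha>2 + 1"
    and "\<alpha>D \<equiv> (\<alpha>1 + \<alpha>2 + 1) / (\<alpha>1 + 1)"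
    and "\<alpha>C \<equiv> (\<alpha>1 + \<alpha>2 + 1) * ((\<alpha>1 + \<alpha>2 + 1) / (\<alpha>1 + 1)) / ((\<alpha>1 + \<alpha>2 + 1) + 2 * ((\<alpha>1 + \<alpha>2 + 1) / (\<alpha>1 + 1)))"
  shows "\<exists>Nopt Dopt :: real \<Rightarrow> real.
     (\<forall>\<^sub>F C in at_top.
        is_opt_alloc \<alpha>N \<alpha>D C (Nopt C) (Dopt C) \<and>
        (\<forall>N D. is_opt_alloc \<alpha>N \<alpha>D C N D \<longrightarrow> N = Nopt C \<and> D = Dopt C) \<and>
        Nopt C < Dopt C)
   \<and> Nopt \<in> \<Theta>[at_top](\<lambda>C. C powr (\<alpha>D / (\<alpha>N + 2 * \<alpha>D)))
   \<and> Dopt \<in> \<Theta>[at_top](\<lambda>C. C powr (1 - 2 * \<alpha>D / (\<alpha>N + 2 * \<alpha>D)))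
   \<and> (\<lambda>C. loss \<alpha>N \<alpha>D (Nopt C) (Dopt C)) \<in> \<Theta>[at_top](\<lambda>C. C powr (- \<alpha>C))
   \<and> \<alpha>D / (\<alpha>N + 2 * \<alpha>D) = 1 / (\<alpha>1 + 3)
   \<and> 1 - 2 * \<alpha>D / (\<alpha>N + 2 * \<alpha>D) = (\<alpha>1 + 1) / (\<alpha>1 + 3)
   \<and> \<alpha>C = (\<alpha>1 + \<alpha>2 + 1) / (\<alpha>1 + 3)
   \<and> \<alpha>C > 0"
proof -
  define a where "a = \<alpha>N"
  define b where "b = \<alpha>D"
  have a: "a > 0" using assms(2) unfolding a_def \<alpha>N_def .
  have a11: "\<alpha>1 + 1 > 0" using assms(1) by linarith
  have b: "b > 0" unfolding b_def \<alpha>D_def using assms(2) a11 by (rule divide_pos_pos)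
  have bdef: "b = a / (\<alpha>1 + 1)" unfolding b_def a_def \<alpha>D_def \<alpha>N_def ..
  have abd: "a = b * (\<alpha>1 + 1)" unfolding bdef using a11 by simp
  have ba: "b < a"
  proof -
    have "b * 1 < b * (\<alpha>1 + 1)" using b assms(1) by (intro mult_strict_left_mono) auto
    then show ?thesis using abd by simp
  qed
  have ab2: "a + 2*b > 0" using a b by linarith
  have aC: "\<alpha>C = a * b / (a + 2*b)" unfolding \<alpha>C_def a_def b_def \<alpha>N_def \<alpha>D_def ..
  define e where "e = b / (a + 2*b)"
  have e_eq: "e * (a + 2*b) = b" unfolding e_def using ab2 by simp
  have e0: "e > 0" unfolding e_def using b ab2 by (rule divide_pos_pos)
  have e3: "1 - 3*e > 0"
  proof -
    have h: "3 * e * (a + 2*b) < 1 * (a + 2*b)" using e_eq ba by (simp add: algebra_simps)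
    have "3 * e < 1" using mult_less_cancel_right_pos[OF ab2, of "3*e" 1] h by blast
    then show ?thesis by linarith
  qed
  have aCe: "\<alpha>C = a * e" unfolding aC e_def by simp
  have aCpos: "\<alpha>C > 0" unfolding aCe using a e0 by (rule mult_pos_pos)
  have aCb: "\<alpha>C - b/3 > 0"
  proof -
    have "3 * (a * e) * (a + 2*b) = 3 * a * (e * (a + 2*b))" by (simp only: mult_ac)
    also have "\<dots> = 3 * a * b" unfolding e_eq ..
    finally have "3 * (a * e) * (a + 2*b) = 3 * a * b" .
    moreover have "b * (a + 2*b) < 3 * a * b"
    proof -
      have "b * b < b * a" using mult_strict_left_mono[OF ba b] .
      then show ?thesis by (simp add: algebra_simps)
    qed
    ultimately have h: "b * (a + 2*b) < 3 * (a * e) * (a + 2*b)" by linarith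
    have "b < 3 * (a * e)" using mult_less_cancel_right_pos[OF ab2, of b "3 * (a * e)"] h by blast
    then show ?thesis unfolding aCe by linarith
  qed
  define k where "k = (a / (2*b)) powr (1 / (a + 2*b))"
  have k0: "k > 0" unfolding k_def using a b by simp
  have hk: "k powr (a + 2*b) = a / (2*b)"
  proof -
    have "k powr (a + 2*b) = (a / (2*b)) powr (1 / (a + 2*b) * (a + 2*b))"
      unfolding k_def by (rule powr_powr)
    also have "1 / (a + 2*b) * (a + 2*b) = 1" using ab2 by simp
    finally show ?thesis using a b by simp
  qed
  have hk2: "a * k powr (-a) = 2*b * k powr (2*b)"
  proof -
    have "k powr (2*b) = k powr (a + 2*b + (-a))" by simp
    also have "\<dots> = k powr (a + 2*b) * k powr (-a)" by (rule powr_add)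
    finally have "k powr (2*b) = a / (2*b) * k powr (-a)" unfolding hk .
    then show ?thesis using b by simp
  qed
  define Nopt where "Nopt = (\<lambda>C::real. k * C powr e)"
  define Dopt where "Dopt = (\<lambda>C::real. C / (Nopt C)^2)"
  define L where "L = k powr (-a) + k powr (2*b)"
  have L0: "L > 0" unfolding L_def by (intro add_pos_pos) (use k0 in simp_all)
  have npow: "(Nopt C) powr x = k powr x * C powr (e * x)" for C x
    unfolding Nopt_def powr_mult powr_powr ..
  have hC: "C powr (-(a*e)) = C powr (-b) * C powr (2*b*e)" for C :: real
  proof -
    have h: "-(a*e) = -b + 2*b*e" using e_eq by (simp add: algebra_simps)
    have "C powr (-b) * C powr (2*b*e) = C powr (-b + 2*b*e)" by (simp only: powr_add)
    then show ?thesis by (simp only: h)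
  qed
  have n1: "(Nopt C) powr (-a) = k powr (-a) * C powr (-(a*e))" for C
  proof -
    have h: "e * (-a) = -(a*e)" by simp
    show ?thesis unfolding npow h ..
  qed
  have n2: "(Nopt C) powr (2*b) = k powr (2*b) * C powr (2*b*e)" for C
  proof -
    have h: "e * (2*b) = 2*b*e" by simp
    show ?thesis unfolding npow h ..
  qed
  have Npos: "Nopt C > 0" if "C > 0" for C using that k0 by (simp add: Nopt_def)
  have cond: "a * (Nopt C) powr (-a) = 2*b * (C powr (-b) * (Nopt C) powr (2*b))" for C
  proof -
    have "a * (Nopt C) powr (-a) = (a * k powr (-a)) * C powr (-(a*e))"
      unfolding n1 by (simp only: mult.assoc)
    also have "\<dots> = (2*b * k powr (2*b)) * (C powr (-b) * C powr (2*b*e))"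
      unfolding hk2 hC ..
    also have "\<dots> = 2*b * (C powr (-b) * (Nopt C) powr (2*b))"
      unfolding n2 by (simp only: mult_ac)
    finally show ?thesis .
  qed
  have aN: "\<alpha>N = a" and bD: "\<alpha>D = b" by (simp_all only: a_def b_def)
  have lossN: "loss \<alpha>N \<alpha>D (Nopt C) (Dopt C) = L * C powr (-\<alpha>C)" if C: "C > 0" for C
  proof -
    have "loss \<alpha>N \<alpha>D (Nopt C) (Dopt C) = (Nopt C) powr (-a) + C powr (-b) * (Nopt C) powr (2*b)"
      unfolding loss_def aN bD Dopt_def eqp[OF Npos[OF C] C] ..
    also have "\<dots> = k powr (-a) * C powr (-(a*e)) + k powr (2*b) * (C powr (-b) * C powr (2*b*e))"
      unfolding n1 n2 by (simp only: mult_ac)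
    also have "\<dots> = (k powr (-a) + k powr (2*b)) * C powr (-(a*e))"
      unfolding hC[of C] by (simp only: distrib_right)
    also have "\<dots> = L * C powr (-\<alpha>C)"
      unfolding L_def aCe ..
    finally show ?thesis .
  qed
  have Dform: "Dopt C = k powr (-2) * C powr (1 - 2*e)" if C: "C > 0" for C
  proof -
    have N2: "(Nopt C)^2 = k powr 2 * C powr (2*e)"
    proof -
      have "(Nopt C)^2 = (Nopt C) powr 2" using Npos[OF C] by simp
      also have "\<dots> = k powr 2 * C powr (e*2)" by (rule npow)
      finally show ?thesis by (simp only: mult.commute[of e 2])
    qed
    have k22: "k powr (-2) * k powr 2 = 1"
    proof -
      have "k powr (-2) * k powr 2 = k powr (-2 + 2)" by (simp only: powr_add)
      then show ?thesis using k0 by simp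
    qed
    have C2: "C powr (1 - 2*e) * C powr (2*e) = C"
    proof -
      have "C powr (1 - 2*e) * C powr (2*e) = C powr (1 - 2*e + 2*e)" by (simp only: powr_add)
      then show ?thesis using C by simp
    qed
    have pos: "(Nopt C)^2 > 0" using Npos[OF C] by simp
    have "k powr (-2) * C powr (1 - 2*e) * (Nopt C)^2 = (k powr (-2) * k powr 2) * (C powr (1 - 2*e) * C powr (2*e))"
      unfolding N2 by (simp only: mult_ac)
    also have "\<dots> = C" unfolding k22 C2 by simp
    finally have "k powr (-2) * C powr (1 - 2*e) * (Nopt C)^2 = C" .
    then show ?thesis unfolding Dopt_def using pos by (simp add: divide_eq_eq)
  qed
  have ev1: "\<forall>\<^sub>F C in at_top. k^3 < C powr (1 - 3*e)"
    using my_powr_at_top[OF e3] .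
  have ev2: "\<forall>\<^sub>F C in at_top. L < C powr (\<alpha>C - b/3)"
    using my_powr_at_top[OF aCb] .
  have main: "is_opt_alloc \<alpha>N \<alpha>D C (Nopt C) (Dopt C) \<and>
        (\<forall>N D. is_opt_alloc \<alpha>N \<alpha>D C N D \<longrightarrow> N = Nopt C \<and> D = Dopt C) \<and>
        Nopt C < Dopt C"
    if C: "C > 0" and c1: "k^3 < C powr (1 - 3*e)" and c2: "L < C powr (\<alpha>C - b/3)" for C
  proof -
    have k3: "k powr (-2) * k^3 = k"
    proof -
      have "k^3 = k powr 3" using k0 by simp
      then have "k powr (-2) * k^3 = k powr (-2 + 3)" by (simp only: powr_add)
      then show ?thesis using k0 by simp
    qed
    have "Nopt C = (k powr (-2) * k^3) * C powr e" unfolding Nopt_def k3 ..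
    also have "\<dots> < (k powr (-2) * C powr (1 - 3*e)) * C powr e"
      using c1 k0 C by (intro mult_strict_right_mono mult_strict_left_mono) auto
    also have "\<dots> = Dopt C"
    proof -
      have h: "1 - 3*e + e = 1 - 2*e" by simp
      have "C powr (1 - 3*e) * C powr e = C powr (1 - 2*e)" unfolding h[symmetric] powr_add ..
      then show ?thesis unfolding Dform[OF C] by (simp only: mult.assoc)
    qed
    finally have NltD: "Nopt C < Dopt C" .
    have strict: "loss \<alpha>N \<alpha>D (Nopt C) (Dopt C) < loss \<alpha>N \<alpha>D N' D'"
      if N': "N' > 0" and D': "D' > 0" and cN: "compute N' D' = C" and ne: "\<not> (N' = Nopt C \<and> D' = Dopt C)" for N' D'
    proof (cases "N' < D'")
      case True
      then have "min N' D' = N'" by simp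
      then have cC: "N' * D' * N' = C" using cN unfolding compute_def by simp
      have "D' * N'^2 = C" using cC by (simp only: power2_eq_square mult_ac)
      then have DD: "D' = C / N'^2" using N' by (simp add: eq_divide_eq)
      have "N' \<noteq> Nopt C"
      proof
        assume "N' = Nopt C"
        then have "D' = Dopt C" unfolding DD Dopt_def by simp
        then show False using ne \<open>N' = Nopt C\<close> by blast
      qed
      from key[OF a b C Npos[OF C] N' cond[of C] this]
      show ?thesis unfolding loss_def aN bD DD Dopt_def .
    next
      case False
      then have "min N' D' = D'" by simp
      then have cC: "N' * D' * D' = C" using cN unfolding compute_def by simp
      have "D' * D' * D' \<le> N' * D' * D'" using False D' by (intro mult_right_mono) auto
      then have "D'^3 \<le> C" unfolding cC by (simp only: power3_eq_cube)
      then have "(D'^3) powr (-b/3) \<ge> C powr (-b/3)"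
        using b D' by (intro powr_mono2') auto
      moreover have "(D'^3) powr (-b/3) = D' powr (-b)"
      proof -
        have h3: "D'^3 = D' powr 3" using D' by simp
        have "(D'^3) powr (-b/3) = D' powr (3 * (-b/3))" unfolding h3 powr_powr ..
        then show ?thesis by simp
      qed
      ultimately have d1: "D' powr (-b) \<ge> C powr (-b/3)" by simp
      have "loss \<alpha>N \<alpha>D (Nopt C) (Dopt C) = L * C powr (-\<alpha>C)" by (rule lossN[OF C])
      also have "\<dots> < C powr (\<alpha>C - b/3) * C powr (-\<alpha>C)"
        using c2 C by (intro mult_strict_right_mono) auto
      also have "\<dots> = C powr (-b/3)"
      proof -
        have h: "\<alpha>C - b/3 + - \<alpha>C = -b/3" by simp
        show ?thesis unfolding h[symmetric] powr_add ..
      qed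
      also have "\<dots> < N' powr (-a) + D' powr (-b)" using d1 N' powr_gt_zero[of N' "-a"] by linarith
      finally show ?thesis unfolding loss_def aN bD .
    qed
    have compN: "compute (Nopt C) (Dopt C) = C"
    proof -
      have "min (Nopt C) (Dopt C) = Nopt C" using NltD by simp
      then have "compute (Nopt C) (Dopt C) = Dopt C * (Nopt C)^2"
        unfolding compute_def by (simp only: power2_eq_square mult_ac)
      also have "\<dots> = C" unfolding Dopt_def using Npos[OF C] by simp
      finally show ?thesis .
    qed
    have Dpos: "Dopt C > 0" using NltD Npos[OF C] by simp
    have opt: "is_opt_alloc \<alpha>N \<alpha>D C (Nopt C) (Dopt C)"
      unfolding is_opt_alloc_def
    proof (intro conjI allI impI Npos[OF C] Dpos compN)
      fix N' D' assume h: "N' > 0" "D' > 0" "compute N' D' = C"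
      show "loss \<alpha>N \<alpha>D (Nopt C) (Dopt C) \<le> loss \<alpha>N \<alpha>D N' D'"
      proof (cases "N' = Nopt C \<and> D' = Dopt C")
        case True then show ?thesis by simp
      next
        case False then show ?thesis using strict[OF h False] by simp
      qed
    qed
    have "N = Nopt C \<and> D = Dopt C" if h: "is_opt_alloc \<alpha>N \<alpha>D C N D" for N D
    proof (rule ccontr)
      assume ne: "\<not> (N = Nopt C \<and> D = Dopt C)"
      have hN: "N > 0" "D > 0" "compute N D = C" using h unfolding is_opt_alloc_def by auto
      have "loss \<alpha>N \<alpha>D N D \<le> loss \<alpha>N \<alpha>D (Nopt C) (Dopt C)"
        using h Npos[OF C] Dpos compN unfolding is_opt_alloc_def by blast
      moreover have "loss \<alpha>N \<alpha>D (Nopt C) (Dopt C) < loss \<alpha>N \<alpha>D N D" by (rule strict[OF hN ne])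
      ultimately show False by linarith
    qed
    then show ?thesis using opt NltD by blast
  qed
  have ev: "\<forall>\<^sub>F C in at_top. is_opt_alloc \<alpha>N \<alpha>D C (Nopt C) (Dopt C) \<and>
        (\<forall>N D. is_opt_alloc \<alpha>N \<alpha>D C N D \<longrightarrow> N = Nopt C \<and> D = Dopt C) \<and>
        Nopt C < Dopt C"
    using ev1 ev2 eventually_gt_at_top[of "0::real"] by eventually_elim (rule main)
  have ee: "\<alpha>D / (\<alpha>N + 2 * \<alpha>D) = e" unfolding e_def a_def b_def ..
  have ee2: "2 * \<alpha>D / (\<alpha>N + 2 * \<alpha>D) = 2 * e"
    unfolding ee[symmetric] by (rule times_divide_eq_right[symmetric])
  have kne: "k \<noteq> 0" and kne2: "k powr (-2) \<noteq> 0" and Lne: "L \<noteq> 0" using k0 L0 by simp_all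
  have t1: "Nopt \<in> \<Theta>[at_top](\<lambda>C. C powr (\<alpha>D / (\<alpha>N + 2 * \<alpha>D)))"
    unfolding ee Nopt_def landau_theta.cmult_in_iff[OF kne] by (rule bigtheta_refl)
  have t2: "Dopt \<in> \<Theta>[at_top](\<lambda>C. C powr (1 - 2 * \<alpha>D / (\<alpha>N + 2 * \<alpha>D)))"
  proof -
    have "Dopt \<in> \<Theta>[at_top](\<lambda>C. k powr (-2) * C powr (1 - 2*e))"
      by (rule bigthetaI_cong, rule eventually_mono[OF eventually_gt_at_top[of "0::real"]], rule Dform)
    then show ?thesis unfolding ee2 landau_theta.cmult[OF kne2] .
  qed
  have t3: "(\<lambda>C. loss \<alpha>N \<alpha>D (Nopt C) (Dopt C)) \<in> \<Theta>[at_top](\<lambda>C. C powr (- \<alpha>C))"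
  proof -
    have "(\<lambda>C. loss \<alpha>N \<alpha>D (Nopt C) (Dopt C)) \<in> \<Theta>[at_top](\<lambda>C. L * C powr (-\<alpha>C))"
      by (rule bigthetaI_cong, rule eventually_mono[OF eventually_gt_at_top[of "0::real"]], rule lossN)
    then show ?thesis unfolding landau_theta.cmult[OF Lne] .
  qed
  have e1: "e = 1 / (\<alpha>1 + 3)"
  proof -
    have h: "a + 2*b = b * (\<alpha>1 + 3)" unfolding abd by (simp add: algebra_simps)
    show ?thesis unfolding e_def h using b by simp
  qed
  have x1: "\<alpha>D / (\<alpha>N + 2 * \<alpha>D) = 1 / (\<alpha>1 + 3)" unfolding ee e1 ..
  have x2: "1 - 2 * \<alpha>D / (\<alpha>N + 2 * \<alpha>D) = (\<alpha>1 + 1) / (\<alpha>1 + 3)"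
  proof -
    have p: "\<alpha>1 + 3 > 0" using assms(1) by linarith
    have "1 - 2 * (1 / (\<alpha>1 + 3)) = (\<alpha>1 + 1) / (\<alpha>1 + 3)" using p by (simp add: field_simps)
    then show ?thesis unfolding ee2 e1 .
  qed
  have x3: "\<alpha>C = (\<alpha>1 + \<alpha>2 + 1) / (\<alpha>1 + 3)"
    unfolding aCe e1 a_def \<alpha>N_def by simp
  show ?thesis by (rule exI[of _ Nopt], rule exI[of _ Dopt], intro conjI ev t1 t2 t3 x1 x2 x3 aCpos)
qed

end
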